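(* Let $A_0\in\mathbb{R}^{n\times n}$. There exists a symmetric matrix $P_0\succeq 0$ such that $$A_0^\top P_0+P_0A_0\preceq 0\quad\text{and}\quad \ker P_0\subseteq \ker A_0$$ if and only if all eigenvalues of $A_0$ have non-positive real part, every Jordan block of $A_0$ associated with the eigenvalue $0$ has dimension at most $2$, and every Jordan block associated with a nonzero eigenvalue on the imaginary axis has dimension $1$.
   Context: $\succeq 0$ ($\preceq 0$) denotes positive (negative) semi-definiteness of a symmetric matrix. *)

theory Defs
  imports "Jordan_Normal_Form.Jordan_Normal_Form_Existence" "Jordan_Normal_Form.Matrix_Kernel"
begin

definition sym_mat :: "real mat \<Rightarrow> bool" where
  "sym_mat P \<longleftrightarrow> transpose_mat P = P"

definition psd_mat :: "nat \<Rightarrow> real mat \<Rightarrow> bool" where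
  "psd_mat n P \<longleftrightarrow> P \<in> carrier_mat n n \<and> sym_mat P \<and>
     (\<forall>v \<in> carrier_vec n. v \<bullet> (P *\<^sub>v v) \<ge> 0)"

definition nsd_mat :: "nat \<Rightarrow> real mat \<Rightarrow> bool" where
  "nsd_mat n P \<longleftrightarrow> P \<in> carrier_mat n n \<and> sym_mat P \<and>
     (\<forall>v \<in> carrier_vec n. v \<bullet> (P *\<^sub>v v) \<le> 0)"

end

theory Submission
  imports Defs
begin


lemma jm_cons: "jordan_matrix ((k,a)#rest) = four_block_mat (jordan_block k a)
   (0\<^sub>m k (sum_list (map fst rest))) (0\<^sub>m (sum_list (map fst rest)) k) (jordan_matrix rest)"
  unfolding jordan_matrix_def by (simp add: Let_def jordan_matrix_dim[unfolded jordan_matrix_def])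

lemma jm_cons_index: assumes "i < k + sum_list (map fst rest)" "j < k + sum_list (map fst rest)"
  shows "jordan_matrix ((k,a)#rest) $$ (i,j) = (if i < k then (if j < k then (if i = j then a else if Suc i = j then 1 else 0) else 0)
     else if j < k then 0 else jordan_matrix rest $$ (i - k, j - k))"
  using assms unfolding jm_cons by (subst index_mat_four_block) auto

lemma jm_in: "i < k \<Longrightarrow> j < k \<Longrightarrow> jordan_matrix ((k,a)#rest) $$ (i,j) = (if i = j then a else if Suc i = j then 1 else 0)"
  by (subst jm_cons_index) auto
lemma jm_off1: "i < k \<Longrightarrow> k \<le> j \<Longrightarrow> j < k + sum_list (map fst rest) \<Longrightarrow> jordan_matrix ((k,a)#rest) $$ (i,j) = 0"
  by (subst jm_cons_index) auto
lemma jm_off2: "j < k \<Longrightarrow> k \<le> i \<Longrightarrow> i < k + sum_list (map fst rest) \<Longrightarrow> jordan_matrix ((k,a)#rest) $$ (i,j) = 0"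
  by (subst jm_cons_index) auto
lemma jm_rest: "i < sum_list (map fst rest) \<Longrightarrow> j < sum_list (map fst rest) \<Longrightarrow> jordan_matrix ((k,a)#rest) $$ (k+i,k+j) = jordan_matrix rest $$ (i,j)"
  by (subst jm_cons_index) auto

lemma jm_a: fixes n_as :: "(nat \<times> complex) list"
  shows "i < sum_list (map fst n_as) \<Longrightarrow> j < sum_list (map fst n_as) \<Longrightarrow> j \<noteq> i \<Longrightarrow> j \<noteq> Suc i \<Longrightarrow> jordan_matrix n_as $$ (i,j) = 0"
proof (induct n_as arbitrary: i j)
  case Nil then show ?case by simp
next
  case (Cons ka rest)
  obtain k a where ka: "ka = (k,a)" by force
  show ?case
  proof (cases "i < k")
    case True
    then show ?thesis using Cons(2-) unfolding ka by (cases "j < k") (auto simp: jm_in jm_off1)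
  next
    case False
    then obtain i' where i: "i = k + i'" by (metis le_add_diff_inverse not_less)
    show ?thesis
    proof (cases "j < k")
      case True
      then show ?thesis using Cons(2-) False unfolding ka by (auto simp: jm_off2)
    next
      case False
      then obtain j' where j: "j = k + j'" by (metis le_add_diff_inverse not_less)
      show ?thesis using Cons(2-) Cons(1)[of i' j'] unfolding ka i j by (auto simp: jm_rest)
    qed
  qed
qed

lemma jm_b: fixes n_as :: "(nat \<times> complex) list"
  shows "Suc i < sum_list (map fst n_as) \<Longrightarrow> jordan_matrix n_as $$ (i,Suc i) = 0 \<or> jordan_matrix n_as $$ (i,Suc i) = 1"
proof (induct n_as arbitrary: i)
  case Nil then show ?case by simp
next
  case (Cons ka rest)
  obtain k a where ka: "ka = (k,a)" by force
  show ?case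
  proof (cases "i < k")
    case True
    then show ?thesis using Cons(2-) unfolding ka by (cases "Suc i < k") (auto simp: jm_in jm_off1)
  next
    case False
    then obtain i' where i: "i = k + i'" by (metis le_add_diff_inverse not_less)
    show ?thesis using Cons(2-) Cons(1)[of i'] jm_rest[of i' rest "Suc i'" k a] unfolding ka i by auto
  qed
qed

lemma jm_c: fixes n_as :: "(nat \<times> complex) list"
  shows "Suc i < sum_list (map fst n_as) \<Longrightarrow> jordan_matrix n_as $$ (i,Suc i) \<noteq> 0 \<Longrightarrow> 
    jordan_matrix n_as $$ (Suc i,Suc i) = jordan_matrix n_as $$ (i, i)"
proof (induct n_as arbitrary: i)
  case Nil then show ?case by simp
next
  case (Cons ka rest)
  obtain k a where ka: "ka = (k,a)" by force
  show ?case
  proof (cases "i < k")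
    case True
    then show ?thesis using Cons(2-) unfolding ka by (cases "Suc i < k") (auto simp: jm_in jm_off1)
  next
    case False
    then obtain i' where i: "i = k + i'" by (metis le_add_diff_inverse not_less)
    show ?thesis using Cons(2-) Cons(1)[of i'] jm_rest[of i' rest "Suc i'" k a] 
      jm_rest[of i' rest i' k a] jm_rest[of "Suc i'" rest "Suc i'" k a] unfolding ka i by auto
  qed
qed

lemma jm_d: fixes n_as :: "(nat \<times> complex) list"
  shows "i < sum_list (map fst n_as) \<Longrightarrow> \<exists>k. (k, jordan_matrix n_as $$ (i,i)) \<in> set n_as"
proof (induct n_as arbitrary: i)
  case Nil then show ?case by simp
next
  case (Cons ka rest)
  obtain k a where ka: "ka = (k,a)" by force
  show ?case
  proof (cases "i < k")
    case True
    then show ?thesis using Cons(2-) unfolding ka by (auto simp: jm_in)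
  next
    case False
    then obtain i' where i: "i = k + i'" by (metis le_add_diff_inverse not_less)
    show ?thesis using Cons(2-) Cons(1)[of i'] jm_rest[of i' rest i' k a] unfolding ka i by auto
  qed
qed

lemma jm_e: fixes n_as :: "(nat \<times> complex) list"
  shows "Suc i < sum_list (map fst n_as) \<Longrightarrow> jordan_matrix n_as $$ (i,Suc i) \<noteq> 0 \<Longrightarrow> 
    \<exists>k\<ge>2. (k, jordan_matrix n_as $$ (i,i)) \<in> set n_as"
proof (induct n_as arbitrary: i)
  case Nil then show ?case by simp
next
  case (Cons ka rest)
  obtain k a where ka: "ka = (k,a)" by force
  show ?case
  proof (cases "i < k")
    case True
    then show ?thesis using Cons(2-) unfolding ka by (cases "Suc i < k") (auto simp: jm_in jm_off1 intro!: exI[of _ k])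
  next
    case False
    then obtain i' where i: "i = k + i'" by (metis le_add_diff_inverse not_less)
    show ?thesis using Cons(2-) Cons(1)[of i'] jm_rest[of i' rest "Suc i'" k a] 
      jm_rest[of i' rest i' k a] unfolding ka i by auto
  qed
qed

lemma jm_f: fixes n_as :: "(nat \<times> complex) list"
  shows "Suc (Suc i) < sum_list (map fst n_as) \<Longrightarrow> jordan_matrix n_as $$ (i,Suc i) \<noteq> 0 \<Longrightarrow> 
    jordan_matrix n_as $$ (Suc i,Suc (Suc i)) \<noteq> 0 \<Longrightarrow>
    \<exists>k\<ge>3. (k, jordan_matrix n_as $$ (i,i)) \<in> set n_as"
proof (induct n_as arbitrary: i)
  case Nil then show ?case by simp
next
  case (Cons ka rest)
  obtain k a where ka: "ka = (k,a)" by force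
  show ?case
  proof (cases "i < k")
    case True
    show ?thesis
    proof (cases "Suc (Suc i) < k")
      case True
      then show ?thesis using Cons(2-) unfolding ka by (auto simp: jm_in intro!: exI[of _ k])
    next
      case False
      then have "Suc i < k \<Longrightarrow> jordan_matrix ((k,a)#rest) $$ (Suc i,Suc (Suc i)) = 0"
        using Cons(2) unfolding ka by (intro jm_off1) auto
      moreover have "\<not> Suc i < k \<Longrightarrow> jordan_matrix ((k,a)#rest) $$ (i,Suc i) = 0"
        using Cons(2) True unfolding ka by (intro jm_off1) auto
      ultimately show ?thesis using Cons(3,4) unfolding ka by auto
    qed
  next
    case False
    then obtain i' where i: "i = k + i'" by (metis le_add_diff_inverse not_less)
    show ?thesis using Cons(2-) Cons(1)[of i'] jm_rest[of i' rest "Suc i'" k a] 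
      jm_rest[of i' rest i' k a] jm_rest[of "Suc i'" rest "Suc (Suc i')" k a] unfolding ka i by auto
  qed
qed

lemma jm_g: fixes n_as :: "(nat \<times> complex) list"
  shows "(k,z) \<in> set n_as \<Longrightarrow> k \<ge> 2 \<Longrightarrow> \<exists>i. Suc i < sum_list (map fst n_as) \<and>
     jordan_matrix n_as $$ (i,Suc i) = 1 \<and> jordan_matrix n_as $$ (i,i) = z"
proof (induct n_as)
  case Nil then show ?case by simp
next
  case (Cons ka rest)
  obtain k0 a where ka: "ka = (k0,a)" by force
  show ?case
  proof (cases "(k,z) = ka")
    case True
    then show ?thesis using Cons(3) unfolding ka
      by (intro exI[of _ 0]) (auto simp: jm_in)
  next
    case False
    then obtain i where i: "Suc i < sum_list (map fst rest)"
     "jordan_matrix rest $$ (i,Suc i) = 1 \<and> jordan_matrix rest $$ (i,i) = z" using Cons by auto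
    show ?thesis using i jm_rest[of i rest "Suc i" k0 a] jm_rest[of i rest i k0 a] unfolding ka
      by (intro exI[of _ "k0 + i"]) auto
  qed
qed

lemma jm_h: fixes n_as :: "(nat \<times> complex) list"
  shows "(k,z) \<in> set n_as \<Longrightarrow> k \<ge> 3 \<Longrightarrow> \<exists>i. Suc (Suc i) < sum_list (map fst n_as) \<and>
     jordan_matrix n_as $$ (i,Suc i) = 1 \<and> jordan_matrix n_as $$ (Suc i,Suc (Suc i)) = 1 \<and> jordan_matrix n_as $$ (i,i) = z"
proof (induct n_as)
  case Nil then show ?case by simp
next
  case (Cons ka rest)
  obtain k0 a where ka: "ka = (k0,a)" by force
  show ?case
  proof (cases "(k,z) = ka")
    case True
    then show ?thesis using Cons(3) unfolding ka
      by (intro exI[of _ 0]) (auto simp: jm_in)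
  next
    case False
    then obtain i where i: "Suc (Suc i) < sum_list (map fst rest)"
     "jordan_matrix rest $$ (i,Suc i) = 1 \<and> jordan_matrix rest $$ (Suc i,Suc (Suc i)) = 1 \<and> jordan_matrix rest $$ (i,i) = z" using Cons by auto
    show ?thesis using i jm_rest[of i rest "Suc i" k0 a] jm_rest[of i rest i k0 a] 
       jm_rest[of "Suc i" rest "Suc (Suc i)" k0 a] unfolding ka
      by (intro exI[of _ "k0 + i"]) auto
  qed
qed




definition qr :: "nat \<Rightarrow> (nat \<Rightarrow> nat \<Rightarrow> real) \<Rightarrow> (nat \<Rightarrow> real) \<Rightarrow> (nat \<Rightarrow> real) \<Rightarrow> real" where
  "qr n m f g = (\<Sum>i<n. \<Sum>j<n. f i * m i j * g j)"
definition hc :: "nat \<Rightarrow> (nat \<Rightarrow> nat \<Rightarrow> real) \<Rightarrow> (nat \<Rightarrow> complex) \<Rightarrow> (nat \<Rightarrow> complex) \<Rightarrow> complex" where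
  "hc n m x y = (\<Sum>i<n. \<Sum>j<n. cnj (x i) * of_real (m i j) * y j)"
definition mvr :: "nat \<Rightarrow> (nat \<Rightarrow> nat \<Rightarrow> real) \<Rightarrow> (nat \<Rightarrow> real) \<Rightarrow> nat \<Rightarrow> real" where
  "mvr n m f i = (\<Sum>j<n. m i j * f j)"
definition mvc :: "nat \<Rightarrow> (nat \<Rightarrow> nat \<Rightarrow> real) \<Rightarrow> (nat \<Rightarrow> complex) \<Rightarrow> nat \<Rightarrow> complex" where
  "mvc n m x i = (\<Sum>j<n. of_real (m i j) * x j)"
definition symm :: "nat \<Rightarrow> (nat \<Rightarrow> nat \<Rightarrow> real) \<Rightarrow> bool" where
  "symm n m = (\<forall>i<n. \<forall>j<n. m i j = m j i)"

lemma qr_sym: assumes "symm n m" shows "qr n m f g = qr n m g f"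
proof -
  have "qr n m f g = (\<Sum>j<n. \<Sum>i<n. f i * m i j * g j)" unfolding qr_def by (rule sum.swap)
  also have "\<dots> = qr n m g f" unfolding qr_def
    by (intro sum.cong refl) (use assms in \<open>auto simp: symm_def\<close>)
  finally show ?thesis .
qed

lemma qr_expand: "qr n m (\<lambda>i. f i + t * g i) (\<lambda>i. f i + t * g i) =
   qr n m f f + t * qr n m f g + t * qr n m g f + t^2 * qr n m g g"
  unfolding qr_def by (simp add: algebra_simps sum.distrib sum_distrib_left power2_eq_square)

lemma qr_mvr: "qr n m f g = (\<Sum>i<n. f i * mvr n m g i)"
  unfolding qr_def mvr_def by (simp add: sum_distrib_left mult.assoc)

lemma neg_aux: "(d::real) \<ge> 0 \<Longrightarrow> t = - S / (d + 1) \<Longrightarrow> S > 0 \<Longrightarrow> 2 * t * S + t\<^sup>2 * d < 0"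
proof -
  assume d: "d \<ge> 0" and t: "t = - S / (d + 1)" and S: "S > 0"
  have "d + 1 \<noteq> 0" using d by auto
  then have ht: "t * (d + 1) = - S" unfolding t by simp
  have "(d+1)\<^sup>2 * (2 * t * S + t\<^sup>2 * d) = 2*S*(t*(d+1))*(d+1) + (t*(d+1))\<^sup>2 * d"
    by (simp add: algebra_simps power2_eq_square)
  also have "\<dots> = -(S\<^sup>2 * (d + 2))" unfolding ht by (simp add: algebra_simps power2_eq_square)
  finally have e: "(d+1)\<^sup>2 * (2 * t * S + t\<^sup>2 * d) = -(S\<^sup>2 * (d + 2))" .
  have "-(S\<^sup>2 * (d + 2)) < 0" using S d by (simp add: mult_pos_pos)
  hence "(d+1)\<^sup>2 * (2 * t * S + t\<^sup>2 * d) < 0" using e by simp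
  thus ?thesis using d by (smt (verit) zero_le_power2 mult_nonneg_nonneg)
qed

lemma psd_kernel: assumes s: "symm n m" and psd: "\<And>f. qr n m f f \<ge> 0" and z: "qr n m f f = 0"
  shows "\<forall>i<n. mvr n m f i = 0"
proof -
  define g where "g = mvr n m f"
  have fg: "qr n m f g = (\<Sum>i<n. (g i)^2)"
  proof -
    have "qr n m f g = qr n m g f" by (rule qr_sym[OF s])
    also have "\<dots> = (\<Sum>i<n. g i * mvr n m f i)" by (rule qr_mvr)
    finally show ?thesis by (simp add: g_def power2_eq_square)
  qed
  define S where "S = (\<Sum>i<n. (g i)^2)"
  define d where "d = qr n m g g"
  have d0: "d \<ge> 0" using psd unfolding d_def by auto
  have S0: "S \<ge> 0" unfolding S_def by (intro sum_nonneg) auto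
  define t where "t = - S / (d + 1)"
  have "0 \<le> qr n m (\<lambda>i. f i + t * g i) (\<lambda>i. f i + t * g i)" by (rule psd)
  also have "\<dots> = 2 * t * S + t^2 * d" unfolding qr_expand z qr_sym[OF s, of g f] fg
    by (simp add: S_def d_def)
  finally have ineq: "0 \<le> 2 * t * S + t^2 * d" .
  have "S = 0"
  proof (rule ccontr)
    assume "S \<noteq> 0" hence Sp: "S > 0" using S0 by auto
    have "2 * t * S + t\<^sup>2 * d < 0" using neg_aux[OF d0 t_def Sp] .
    then show False using ineq by auto
  qed
  hence "\<forall>i\<in>{..<n}. (g i)^2 = 0" unfolding S_def by (subst sum_nonneg_eq_0_iff[symmetric]) auto
  thus ?thesis unfolding g_def by auto
qed

lemma hc_real: assumes s: "symm n m"
  shows "hc n m x x = of_real (qr n m (\<lambda>i. Re (x i)) (\<lambda>i. Re (x i)) + qr n m (\<lambda>i. Im (x i)) (\<lambda>i. Im (x i)))"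
proof -
  have im: "qr n m (\<lambda>i. Re (x i)) (\<lambda>i. Im (x i)) = qr n m (\<lambda>i. Im (x i)) (\<lambda>i. Re (x i))"
    by (rule qr_sym[OF s])
  have "Re (hc n m x x) = qr n m (\<lambda>i. Re (x i)) (\<lambda>i. Re (x i)) + qr n m (\<lambda>i. Im (x i)) (\<lambda>i. Im (x i))"
    unfolding hc_def qr_def by (simp add: algebra_simps sum.distrib)
  moreover have "Im (hc n m x x) = qr n m (\<lambda>i. Re (x i)) (\<lambda>i. Im (x i)) - qr n m (\<lambda>i. Im (x i)) (\<lambda>i. Re (x i))"
    unfolding hc_def qr_def by (simp add: algebra_simps sum.distrib sum_subtractf)
  ultimately show ?thesis unfolding im by (simp add: complex_eq_iff)
qed

lemma mvc_split: "mvc n m x i = of_real (mvr n m (\<lambda>j. Re (x j)) i) + \<i> * of_real (mvr n m (\<lambda>j. Im (x j)) i)"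
  unfolding mvc_def mvr_def by (simp add: complex_eq_iff Re_sum Im_sum)

lemma hc_kernel: assumes s: "symm n m" and psd: "\<And>f. qr n m f f \<ge> 0" and z: "hc n m x x = 0"
  shows "\<forall>i<n. mvr n m (\<lambda>j. Re (x j)) i = 0 \<and> mvr n m (\<lambda>j. Im (x j)) i = 0"
proof -
  have "qr n m (\<lambda>i. Re (x i)) (\<lambda>i. Re (x i)) + qr n m (\<lambda>i. Im (x i)) (\<lambda>i. Im (x i)) = 0"
    using z hc_real[OF s, of x] by (metis of_real_eq_0_iff)
  moreover have "qr n m (\<lambda>i. Re (x i)) (\<lambda>i. Re (x i)) \<ge> 0" "qr n m (\<lambda>i. Im (x i)) (\<lambda>i. Im (x i)) \<ge> 0"
    using psd by auto
  ultimately have "qr n m (\<lambda>i. Re (x i)) (\<lambda>i. Re (x i)) = 0" "qr n m (\<lambda>i. Im (x i)) (\<lambda>i. Im (x i)) = 0"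
    by auto
  thus ?thesis using psd_kernel[OF s psd] by auto
qed

lemma hc_right: "hc n m x y = (\<Sum>i<n. cnj (x i) * mvc n m y i)"
  unfolding hc_def mvc_def by (simp add: sum_distrib_left mult.assoc)

lemma hc_left: assumes "symm n m" shows "hc n m x y = (\<Sum>j<n. cnj (mvc n m x j) * y j)"
proof -
  have "hc n m x y = (\<Sum>j<n. \<Sum>i<n. cnj (x i) * of_real (m i j) * y j)" unfolding hc_def by (rule sum.swap)
  also have "\<dots> = (\<Sum>j<n. cnj (mvc n m x j) * y j)" unfolding mvc_def cnj_sum sum_distrib_right
    by (intro sum.cong refl) (use assms in \<open>auto simp: symm_def\<close>)
  finally show ?thesis .
qed

lemma hc_cong_left: "(\<And>i. i < n \<Longrightarrow> x i = x' i) \<Longrightarrow> hc n m x y = hc n m x' y"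
  unfolding hc_def by auto
lemma hc_cong_right: "(\<And>i. i < n \<Longrightarrow> y i = y' i) \<Longrightarrow> hc n m x y = hc n m x y'"
  unfolding hc_def by auto

lemma hc_lin_left: "hc n m (\<lambda>i. c * x i + u i) y = cnj c * hc n m x y + hc n m u y"
  unfolding hc_def by (simp add: algebra_simps sum.distrib sum_distrib_left)
lemma hc_lin_right: "hc n m x (\<lambda>i. c * y i + u i) = c * hc n m x y + hc n m x u"
  unfolding hc_def by (simp add: algebra_simps sum.distrib sum_distrib_left)

lemma hc_KI: "hc n (\<lambda>i j. (\<Sum>k<n. a k i * p k j) + (\<Sum>k<n. p i k * a k j)) x y
   = hc n p (mvc n a x) y + hc n p x (mvc n a y)"
proof -
  have 1: "hc n (\<lambda>i j. (\<Sum>k<n. a k i * p k j)) x y = hc n p (mvc n a x) y"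
  proof -
    have "hc n (\<lambda>i j. (\<Sum>k<n. a k i * p k j)) x y = (\<Sum>i<n. \<Sum>j<n. \<Sum>k<n. cnj (x i) * of_real (a k i) * of_real (p k j) * y j)"
      unfolding hc_def by (simp add: sum_distrib_left sum_distrib_right mult.assoc)
    also have "\<dots> = (\<Sum>i<n. \<Sum>k<n. \<Sum>j<n. cnj (x i) * of_real (a k i) * of_real (p k j) * y j)"
      by (intro sum.cong refl sum.swap)
    also have "\<dots> = (\<Sum>k<n. \<Sum>i<n. \<Sum>j<n. cnj (x i) * of_real (a k i) * of_real (p k j) * y j)"
      by (rule sum.swap)
    also have "\<dots> = (\<Sum>k<n. \<Sum>j<n. \<Sum>i<n. cnj (x i) * of_real (a k i) * of_real (p k j) * y j)"
      by (intro sum.cong refl sum.swap)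
    also have "\<dots> = hc n p (mvc n a x) y"
      unfolding hc_def mvc_def by (simp add: cnj_sum sum_distrib_left sum_distrib_right mult.commute mult.left_commute)
    finally show ?thesis .
  qed
  have 2: "hc n (\<lambda>i j. (\<Sum>k<n. p i k * a k j)) x y = hc n p x (mvc n a y)"
  proof -
    have "hc n (\<lambda>i j. (\<Sum>k<n. p i k * a k j)) x y = (\<Sum>i<n. \<Sum>j<n. \<Sum>k<n. cnj (x i) * of_real (p i k) * of_real (a k j) * y j)"
      unfolding hc_def by (simp add: sum_distrib_left sum_distrib_right mult.assoc)
    also have "\<dots> = (\<Sum>i<n. \<Sum>k<n. \<Sum>j<n. cnj (x i) * of_real (p i k) * of_real (a k j) * y j)"
      by (intro sum.cong refl sum.swap)
    also have "\<dots> = hc n p x (mvc n a y)"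
      unfolding hc_def mvc_def by (simp add: sum_distrib_left mult.assoc)
    finally show ?thesis .
  qed
  have "hc n (\<lambda>i j. (\<Sum>k<n. a k i * p k j) + (\<Sum>k<n. p i k * a k j)) x y = 
     hc n (\<lambda>i j. (\<Sum>k<n. a k i * p k j)) x y + hc n (\<lambda>i j. (\<Sum>k<n. p i k * a k j)) x y"
    unfolding hc_def by (simp add: algebra_simps sum.distrib)
  then show ?thesis using 1 2 by simp
qed




lemma hc_smult_left: "hc n m (\<lambda>i. c * x i) y = cnj c * hc n m x y"
  unfolding hc_def by (simp add: algebra_simps sum_distrib_left)
lemma hc_smult_right: "hc n m x (\<lambda>i. c * y i) = c * hc n m x y"
  unfolding hc_def by (simp add: algebra_simps sum_distrib_left)
lemma hc_add_left: "hc n m (\<lambda>i. x i + u i) y = hc n m x y + hc n m u y"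
  unfolding hc_def by (simp add: algebra_simps sum.distrib)
lemma hc_add_right: "hc n m x (\<lambda>i. y i + u i) = hc n m x y + hc n m x u"
  unfolding hc_def by (simp add: algebra_simps sum.distrib)
lemma hc_cong_m: "(\<And>i j. i < n \<Longrightarrow> j < n \<Longrightarrow> m i j = m' i j) \<Longrightarrow> hc n m x y = hc n m' x y"
  unfolding hc_def by auto
lemma qr_neg: "qr n (\<lambda>i j. - m i j) f g = - qr n m f g"
  unfolding qr_def by (simp add: sum_negf)
lemma hc_neg: "hc n (\<lambda>i j. - m i j) f g = - hc n m f g"
  unfolding hc_def by (simp add: sum_negf)
lemma mvr_neg: "mvr n (\<lambda>i j. - m i j) f i = - mvr n m f i"
  unfolding mvr_def by (simp add: sum_negf)

locale lyap =
  fixes n :: nat and p q a :: "nat \<Rightarrow> nat \<Rightarrow> real"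
  assumes sp: "symm n p" and psdp: "\<And>f. qr n p f f \<ge> 0"
    and sq: "symm n q" and nsdq: "\<And>f. qr n q f f \<le> 0"
    and qdef: "\<And>i j. i < n \<Longrightarrow> j < n \<Longrightarrow> q i j = (\<Sum>k<n. a k i * p k j) + (\<Sum>k<n. p i k * a k j)"
    and ker: "\<And>f. (\<forall>i<n. mvr n p f i = 0) \<Longrightarrow> (\<forall>i<n. mvr n a f i = 0)"
begin

lemma hcQ: "hc n q x y = hc n p (mvc n a x) y + hc n p x (mvc n a y)"
  by (subst hc_cong_m[OF qdef]) (auto simp: hc_KI)

lemma hcP_real: "\<exists>r\<ge>0. hc n p x x = of_real r"
  using hc_real[OF sp, of x] psdp by (intro exI[of _ "qr n p (\<lambda>i. Re (x i)) (\<lambda>i. Re (x i)) + qr n p (\<lambda>i. Im (x i)) (\<lambda>i. Im (x i))"]) auto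

lemma hcQ_real: "\<exists>r\<le>0. hc n q x x = of_real r"
  using hc_real[OF sq, of x] nsdq by (intro exI[of _ "qr n q (\<lambda>i. Re (x i)) (\<lambda>i. Re (x i)) + qr n q (\<lambda>i. Im (x i)) (\<lambda>i. Im (x i))"]) 
    (auto intro: add_nonpos_nonpos)

lemma kerP: assumes "hc n p x x = 0" shows "\<forall>i<n. mvc n a x i = 0"
proof -
  from hc_kernel[OF sp psdp assms] ker[of "\<lambda>j. Re (x j)"] ker[of "\<lambda>j. Im (x j)"]
  show ?thesis by (auto simp: mvc_split)
qed

lemma kerQ: assumes "hc n q x x = 0" shows "\<forall>i<n. mvc n q x i = 0"
proof -
  have s: "symm n (\<lambda>i j. - q i j)" using sq unfolding symm_def by auto
  have ps: "\<And>f. qr n (\<lambda>i j. - q i j) f f \<ge> 0" unfolding qr_neg using nsdq by auto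
  have "hc n (\<lambda>i j. - q i j) x x = 0" unfolding hc_neg using assms by simp
  from hc_kernel[OF s ps this] show ?thesis by (auto simp: mvc_split mvr_neg)
qed

lemma eig: assumes ev: "\<And>i. i < n \<Longrightarrow> mvc n a x i = z * x i" and nz: "i0 < n" "x i0 \<noteq> 0"
  shows "Re z \<le> 0"
proof (rule ccontr)
  assume "\<not> Re z \<le> 0" hence pos: "Re z > 0" by auto
  obtain r where r: "r \<ge> 0" "hc n p x x = of_real r" using hcP_real by blast
  obtain r' where r': "r' \<le> 0" "hc n q x x = of_real r'" using hcQ_real by blast
  have "hc n q x x = hc n p (\<lambda>i. z * x i) x + hc n p x (\<lambda>i. z * x i)"
    unfolding hcQ by (subst hc_cong_left[OF ev], simp, subst hc_cong_right[OF ev], auto)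
  also have "\<dots> = (cnj z + z) * hc n p x x" by (simp add: hc_smult_left hc_smult_right algebra_simps)
  also have "cnj z + z = of_real (2 * Re z)" by (simp add: complex_eq_iff)
  finally have "r' = 2 * Re z * r" using r r' by (metis of_real_eq_iff of_real_mult)
  hence "r = 0" using r r' pos by (smt (verit) mult_pos_pos zero_less_mult_iff)
  hence "\<forall>i<n. mvc n a x i = 0" using kerP r by auto
  hence "z * x i0 = 0" using ev nz by auto
  hence "z = 0" using nz by auto
  thus False using pos by auto
qed

lemma chain: assumes z: "Re z = 0"
  and v: "\<And>i. i < n \<Longrightarrow> mvc n a v i = z * v i + u i"
  and w: "\<And>i. i < n \<Longrightarrow> mvc n a w i = z * w i + v i"
  and u: "\<And>i. i < n \<Longrightarrow> mvc n p u i = 0"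
  shows "\<forall>i<n. mvc n a v i = 0"
proof -
  have cz: "cnj z + z = 0" using z by (simp add: complex_eq_iff)
  have pu1: "hc n p u y = 0" for y unfolding hc_left[OF sp] using u by simp
  have pu2: "hc n p y u = 0" for y unfolding hc_right using u by simp
  have "hc n q v v = hc n p (\<lambda>i. z * v i + u i) v + hc n p v (\<lambda>i. z * v i + u i)"
    unfolding hcQ by (subst hc_cong_left[OF v], simp, subst hc_cong_right[OF v], auto)
  also have "\<dots> = (cnj z + z) * hc n p v v"
    by (simp only: hc_lin_left hc_lin_right pu1 pu2) (simp add: algebra_simps)
  finally have "hc n q v v = 0" using cz by simp
  hence qv: "\<forall>i<n. mvc n q v i = 0" by (rule kerQ)
  have "hc n q w v = 0" unfolding hc_right using qv by simp
  moreover have "hc n q w v = hc n p (\<lambda>i. z * w i + v i) v + hc n p w (\<lambda>i. z * v i + u i)"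
    unfolding hcQ by (subst hc_cong_left[OF w], simp, subst hc_cong_right[OF v], auto)
  moreover have "\<dots> = (cnj z + z) * hc n p w v + hc n p v v"
    by (simp only: hc_lin_left hc_lin_right pu1 pu2) (simp add: algebra_simps)
  ultimately have "hc n p v v = 0" using cz by simp
  thus ?thesis by (rule kerP)
qed

end




lemma shift_le: assumes "\<And>k. k < n \<Longrightarrow> a k \<ge> (0::real)"
  shows "(\<Sum>k<n. if Suc k < n then a (Suc k) else 0) \<le> (\<Sum>k<n. a k)"
proof (cases n)
  case 0 then show ?thesis by simp
next
  case (Suc m)
  have "(\<Sum>k<n. if Suc k < n then a (Suc k) else 0) = (\<Sum>k<m. a (Suc k))"
    unfolding Suc by (simp add: lessThan_Suc)
  also have "\<dots> \<le> a 0 + (\<Sum>k<m. a (Suc k))" using assms[of 0] Suc by auto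
  also have "\<dots> = (\<Sum>k<n. a k)" unfolding Suc sum.lessThan_Suc_shift by simp
  finally show ?thesis .
qed

lemma re_cnj_self: "Re (cnj y * (l * y)) = Re l * (cmod y)\<^sup>2"
  unfolding cmod_power2 by (simp add: algebra_simps power2_eq_square)

lemma amgm_aux: assumes c: "c > (0::real)" shows "Re (cnj u * v) \<le> (c * (cmod u)\<^sup>2 + (cmod v)\<^sup>2 / c) / 2"
proof -
  have "Re (cnj u * v) \<le> cmod (cnj u * v)" by (rule complex_Re_le_cmod)
  also have "\<dots> = cmod u * cmod v" by (simp add: norm_mult)
  also have "\<dots> \<le> (c * (cmod u)\<^sup>2 + (cmod v)\<^sup>2 / c) / 2"
  proof -
    have "0 \<le> (c * cmod u - cmod v)\<^sup>2" by simp
    hence "2 * c * (cmod u * cmod v) \<le> c * (c * (cmod u)\<^sup>2 + (cmod v)\<^sup>2 / c)"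
      using c by (simp add: power2_eq_square algebra_simps)
    hence "c * (2 * (cmod u * cmod v)) \<le> c * (c * (cmod u)\<^sup>2 + (cmod v)\<^sup>2 / c)" by (simp add: algebra_simps)
    hence "2 * (cmod u * cmod v) \<le> (c * (cmod u)\<^sup>2 + (cmod v)\<^sup>2 / c)" using c by simp
    thus ?thesis by simp
  qed
  finally show ?thesis .
qed

locale jseq =
  fixes n :: nat and lam s :: "nat \<Rightarrow> complex"
  assumes re: "\<And>k. k < n \<Longrightarrow> Re (lam k) \<le> 0"
    and s01: "\<And>k. Suc k < n \<Longrightarrow> s k = 0 \<or> s k = 1"
    and seq: "\<And>k. Suc k < n \<Longrightarrow> s k = 1 \<Longrightarrow> lam (Suc k) = lam k"
    and sneg: "\<And>k. Suc k < n \<Longrightarrow> s k = 1 \<Longrightarrow> lam k = 0 \<or> Re (lam k) < 0"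
begin

definition K :: real where "K = 1 + (\<Sum>k<n. 1 / (Re (lam k))\<^sup>2)"
definition d :: "nat \<Rightarrow> real" where "d k = (if lam k = 0 \<and> Suc k < n \<and> s k = 1 then 0 else K ^ k)"

lemma K_ge: "K \<ge> 1" unfolding K_def by (auto intro!: sum_nonneg)
lemma K_ge2: "k < n \<Longrightarrow> K \<ge> 1 / (Re (lam k))\<^sup>2"
proof -
  assume k: "k < n"
  have "1 / (Re (lam k))\<^sup>2 \<le> (\<Sum>k<n. 1 / (Re (lam k))\<^sup>2)"
    by (rule member_le_sum) (use k in auto)
  thus ?thesis unfolding K_def by auto
qed
lemma d_nonneg: "d k \<ge> 0" unfolding d_def using K_ge by auto

definition T where "T y k = d k * Re (cnj (y k) * (lam k * y k + (if Suc k < n then s k * y (Suc k) else 0)))"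
definition aa where "aa y k = - Re (lam k) * d k * (cmod (y k))\<^sup>2"

lemma aa_nonneg: "k < n \<Longrightarrow> aa y k \<ge> 0"
  unfolding aa_def using re[of k] d_nonneg[of k] by (simp add: mult_nonpos_nonneg)

lemma T_le: assumes k: "k < n" shows "T y k \<le> - aa y k / 2 + (if Suc k < n then aa y (Suc k) / 2 else 0)"
proof -
  have base: "T y k = - aa y k + d k * (if Suc k < n then Re (cnj (y k) * (s k * y (Suc k))) else 0)"
  proof -
    have "Re (cnj (y k) * (lam k * y k + (if Suc k < n then s k * y (Suc k) else 0))) = 
      Re (cnj (y k) * (lam k * y k)) + (if Suc k < n then Re (cnj (y k) * (s k * y (Suc k))) else 0)"
      by (simp add: distrib_left)
    then show ?thesis unfolding T_def aa_def re_cnj_self by (simp add: algebra_simps)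
  qed
  show ?thesis
  proof (cases "Suc k < n \<and> s k = 1")
    case False
    then have "T y k = - aa y k" unfolding base using s01[of k] by auto
    then show ?thesis using aa_nonneg[OF k, of y] aa_nonneg[of "Suc k" y] by (cases "Suc k < n") auto
  next
    case True
    then have sk: "Suc k < n" "s k = 1" by auto
    show ?thesis
    proof (cases "lam k = 0")
      case True
      then have "d k = 0" unfolding d_def using sk by auto
      then have "T y k = 0" "aa y k = 0" unfolding T_def aa_def by auto
      then show ?thesis using aa_nonneg[OF sk(1)] by auto
    next
      case False
      then have neg: "Re (lam k) < 0" using sneg[OF sk] by auto
      define c where "c = - Re (lam k)"
      have c: "c > 0" unfolding c_def using neg by auto
      have l1: "lam (Suc k) = lam k" using seq[OF sk] .
      have dk: "d k = K ^ k" unfolding d_def using False by auto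
      have dk1: "d (Suc k) = K ^ Suc k" unfolding d_def using False l1 by auto
      have Kc: "1 \<le> c\<^sup>2 * K"
      proof -
        have "K \<ge> 1 / c\<^sup>2" using K_ge2[OF k] unfolding c_def by simp
        hence "c\<^sup>2 * K \<ge> c\<^sup>2 * (1 / c\<^sup>2)" using c by (intro mult_left_mono) auto
        thus ?thesis using c by simp
      qed
      have Kp: "K ^ k > 0" using K_ge by auto
      have "T y k = - aa y k + K ^ k * Re (cnj (y k) * y (Suc k))" unfolding base dk using sk by simp
      also have "\<dots> \<le> - aa y k + K ^ k * ((c * (cmod (y k))\<^sup>2 + (cmod (y (Suc k)))\<^sup>2 / c) / 2)"
        using amgm_aux[OF c, of "y k" "y (Suc k)"] Kp by (intro add_left_mono mult_left_mono) auto
      also have "\<dots> = - aa y k / 2 + K ^ k * (cmod (y (Suc k)))\<^sup>2 / c / 2"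
        unfolding aa_def dk c_def using neg by (simp add: field_simps)
      also have "\<dots> \<le> - aa y k / 2 + aa y (Suc k) / 2"
      proof -
        have "K ^ k * (cmod (y (Suc k)))\<^sup>2 \<le> (c\<^sup>2 * K) * (K ^ k * (cmod (y (Suc k)))\<^sup>2)"
          using mult_right_mono[OF Kc, of "K ^ k * (cmod (y (Suc k)))\<^sup>2"] Kp by simp
        hence "K ^ k * (cmod (y (Suc k)))\<^sup>2 / c \<le> (c\<^sup>2 * K) * (K ^ k * (cmod (y (Suc k)))\<^sup>2) / c"
          using c by (intro divide_right_mono) auto
        also have "\<dots> = aa y (Suc k)" unfolding aa_def dk1 l1 c_def using c unfolding c_def
          by (simp add: power2_eq_square field_simps)
        finally show ?thesis by simp
      qed
      finally show ?thesis using sk by simp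
    qed
  qed
qed

lemma quad_neg: "(\<Sum>k<n. T y k) \<le> 0"
proof -
  have "(\<Sum>k<n. T y k) \<le> (\<Sum>k<n. - aa y k / 2 + (if Suc k < n then aa y (Suc k) / 2 else 0))"
    by (intro sum_mono T_le) auto
  also have "\<dots> = (\<Sum>k<n. ((if Suc k < n then aa y (Suc k) else 0) - aa y k) / 2)"
    by (intro sum.cong) auto
  also have "\<dots> = ((\<Sum>k<n. if Suc k < n then aa y (Suc k) else 0) - (\<Sum>k<n. aa y k)) / 2"
    by (simp only: sum_divide_distrib[symmetric] sum_subtractf)
  also have "\<dots> \<le> 0" using shift_le[of n "aa y"] aa_nonneg by auto
  finally show ?thesis .
qed

lemma quad_ker: assumes szero: "\<And>k. Suc (Suc k) < n \<Longrightarrow> s k = 1 \<Longrightarrow> lam k = 0 \<Longrightarrow> s (Suc k) \<noteq> 1"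
  and z: "(\<Sum>k<n. d k * (cmod (y k))\<^sup>2) = 0"
  shows "\<forall>k<n. lam k * y k + (if Suc k < n then s k * y (Suc k) else 0) = 0"
proof -
  have each: "\<And>k. k < n \<Longrightarrow> d k * (cmod (y k))\<^sup>2 = 0"
    using z by (subst (asm) sum_nonneg_eq_0_iff) (auto intro!: mult_nonneg_nonneg d_nonneg)
  have yz: "\<And>k. k < n \<Longrightarrow> d k \<noteq> 0 \<Longrightarrow> y k = 0" using each by auto
  show ?thesis
  proof (intro allI impI)
    fix k assume k: "k < n"
    show "lam k * y k + (if Suc k < n then s k * y (Suc k) else 0) = 0"
    proof (cases "Suc k < n \<and> s k = 1")
      case False
      then have t: "(if Suc k < n then s k * y (Suc k) else 0) = 0" using s01[of k] by auto
      show ?thesis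
      proof (cases "lam k = 0")
        case False
        then have "d k \<noteq> 0" unfolding d_def using K_ge by auto
        then show ?thesis using yz[OF k] t by auto
      qed (use t in auto)
    next
      case True
      then have sk: "Suc k < n" "s k = 1" by auto
      have l1: "lam (Suc k) = lam k" using seq[OF sk] .
      show ?thesis
      proof (cases "lam k = 0")
        case False
        then have "d k \<noteq> 0" "d (Suc k) \<noteq> 0" unfolding d_def using K_ge l1 by auto
        then show ?thesis using yz[OF k] yz[OF sk(1)] by auto
      next
        case True
        have "\<not> (Suc (Suc k) < n \<and> s (Suc k) = 1)" using szero[of k] sk True by auto
        then have "d (Suc k) \<noteq> 0" unfolding d_def using K_ge by auto
        then show ?thesis using yz[OF sk(1)] True sk by auto
      qed
    qed
  qed
qed

end



lemma mv_index: "M \<in> carrier_mat n n \<Longrightarrow> v \<in> carrier_vec n \<Longrightarrow> i < n \<Longrightarrow>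
  (M *\<^sub>v v) $ i = (\<Sum>j<n. M $$ (i,j) * v $ j)"
  by (simp add: scalar_prod_def atLeast0LessThan)

lemma mm_index: "A \<in> carrier_mat n n \<Longrightarrow> B \<in> carrier_mat n n \<Longrightarrow> i < n \<Longrightarrow> j < n \<Longrightarrow>
  (A * B) $$ (i,j) = (\<Sum>k<n. A $$ (i,k) * B $$ (k,j))"
  by (simp add: scalar_prod_def atLeast0LessThan)

lemma qr_cong: "(\<And>i. i < n \<Longrightarrow> f i = f' i) \<Longrightarrow> (\<And>i. i < n \<Longrightarrow> g i = g' i) \<Longrightarrow> qr n m f g = qr n m f' g'"
  unfolding qr_def by auto

lemma sp_qr: "P \<in> carrier_mat n n \<Longrightarrow> v \<in> carrier_vec n \<Longrightarrow> w \<in> carrier_vec n \<Longrightarrow>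
  v \<bullet> (P *\<^sub>v w) = qr n (\<lambda>i j. P $$ (i,j)) (\<lambda>i. v $ i) (\<lambda>i. w $ i)"
  unfolding qr_def by (simp add: scalar_prod_def atLeast0LessThan mv_index sum_distrib_left mult.assoc)

lemma psd_qr: assumes "P \<in> carrier_mat n n" "\<forall>v \<in> carrier_vec n. v \<bullet> (P *\<^sub>v v) \<ge> 0"
  shows "qr n (\<lambda>i j. P $$ (i,j)) f f \<ge> 0"
proof -
  have "vec n f \<bullet> (P *\<^sub>v vec n f) \<ge> 0" using assms by auto
  also have "vec n f \<bullet> (P *\<^sub>v vec n f) = qr n (\<lambda>i j. P $$ (i,j)) f f"
    using assms by (subst sp_qr[of _ n]) (auto intro!: qr_cong)
  finally show ?thesis .
qed

lemma nsd_qr: assumes "P \<in> carrier_mat n n" "\<forall>v \<in> carrier_vec n. v \<bullet> (P *\<^sub>v v) \<le> 0"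
  shows "qr n (\<lambda>i j. P $$ (i,j)) f f \<le> 0"
proof -
  have "vec n f \<bullet> (P *\<^sub>v vec n f) \<le> 0" using assms by auto
  also have "vec n f \<bullet> (P *\<^sub>v vec n f) = qr n (\<lambda>i j. P $$ (i,j)) f f"
    using assms by (subst sp_qr[of _ n]) (auto intro!: qr_cong)
  finally show ?thesis .
qed

lemma sym_symm: "P \<in> carrier_mat n n \<Longrightarrow> sym_mat P \<Longrightarrow> symm n (\<lambda>i j. P $$ (i,j))"
  unfolding sym_mat_def symm_def by (metis carrier_matD index_transpose_mat(1))

lemma lyap_of_mats:
  fixes A0 P0 :: "real mat"
  assumes A: "A0 \<in> carrier_mat n n" and P: "P0 \<in> carrier_mat n n"
    and psd: "psd_mat n P0" and nsd: "nsd_mat n (transpose_mat A0 * P0 + P0 * A0)"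
    and kk: "mat_kernel P0 \<subseteq> mat_kernel A0"
  shows "lyap n (\<lambda>i j. P0 $$ (i,j)) (\<lambda>i j. (transpose_mat A0 * P0 + P0 * A0) $$ (i,j)) (\<lambda>i j. A0 $$ (i,j))"
proof
  let ?Q = "transpose_mat A0 * P0 + P0 * A0"
  have Q: "?Q \<in> carrier_mat n n" using A P by auto
  show "symm n (\<lambda>i j. P0 $$ (i, j))" using psd P unfolding psd_mat_def by (auto intro: sym_symm)
  show "symm n (\<lambda>i j. ?Q $$ (i, j))" using nsd Q unfolding nsd_mat_def by (auto intro: sym_symm)
  show "\<And>f. 0 \<le> qr n (\<lambda>i j. P0 $$ (i, j)) f f" using psd unfolding psd_mat_def by (auto intro: psd_qr)
  show "\<And>f. qr n (\<lambda>i j. ?Q $$ (i, j)) f f \<le> 0" using nsd unfolding nsd_mat_def by (auto intro: nsd_qr)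
  show "\<And>i j. i < n \<Longrightarrow> j < n \<Longrightarrow> ?Q $$ (i, j) = (\<Sum>k<n. A0 $$ (k, i) * P0 $$ (k, j)) + (\<Sum>k<n. P0 $$ (i, k) * A0 $$ (k, j))"
    using A P by (simp add: mm_index[of _ n] scalar_prod_def atLeast0LessThan)
  show "\<And>f. \<forall>i<n. mvr n (\<lambda>i j. P0 $$ (i, j)) f i = 0 \<Longrightarrow> \<forall>i<n. mvr n (\<lambda>i j. A0 $$ (i, j)) f i = 0"
  proof -
    fix f assume h: "\<forall>i<n. mvr n (\<lambda>i j. P0 $$ (i, j)) f i = 0"
    have e: "\<And>i. i < n \<Longrightarrow> (P0 *\<^sub>v vec n f) $ i = mvr n (\<lambda>i j. P0 $$ (i, j)) f i"
      using P by (subst mv_index[of _ n]) (auto simp: mvr_def)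
    have "P0 *\<^sub>v vec n f = 0\<^sub>v n" using h P e by (intro eq_vecI) auto
    hence "vec n f \<in> mat_kernel P0" using P unfolding mat_kernel_def by auto
    hence "vec n f \<in> mat_kernel A0" using kk by auto
    hence "A0 *\<^sub>v vec n f = 0\<^sub>v n" using A unfolding mat_kernel_def by auto
    thus "\<forall>i<n. mvr n (\<lambda>i j. A0 $$ (i, j)) f i = 0" using A 
      by (auto simp: mvr_def) (metis (no_types, lifting) index_zero_vec(1) mv_index vec_carrier index_vec lessThan_iff sum.cong)
  qed
qed

lemma colJ: fixes n_as :: "(nat \<times> complex) list"
  assumes c: "c < sum_list (map fst n_as)"
  shows "(\<Sum>k<sum_list (map fst n_as). s k * jordan_matrix n_as $$ (k,c)) = 
    (if c = 0 then 0 else s (c - 1) * jordan_matrix n_as $$ (c - 1, c)) + s c * jordan_matrix n_as $$ (c,c)"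
proof -
  let ?N = "sum_list (map fst n_as)" let ?J = "jordan_matrix n_as"
  have "(\<Sum>k<?N. s k * ?J $$ (k,c)) = (\<Sum>k<?N. (if k = c then s c * ?J $$ (c,c) else 0) + (if Suc k = c then s k * ?J $$ (k,c) else 0))"
    by (intro sum.cong refl) (use jm_a[OF _ c] in auto)
  also have "\<dots> = s c * ?J $$ (c,c) + (\<Sum>k<?N. if Suc k = c then s k * ?J $$ (k,c) else 0)"
    using c by (simp add: sum.distrib)
  also have "(\<Sum>k<?N. if Suc k = c then s k * ?J $$ (k,c) else 0) = (if c = 0 then 0 else s (c - 1) * ?J $$ (c - 1, c))"
  proof (cases c)
    case (Suc c')
    have "(\<Sum>k<?N. if Suc k = c then s k * ?J $$ (k,c) else 0) = (\<Sum>k<?N. if k = c' then s k * ?J $$ (k,c) else 0)"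
      unfolding Suc by simp
    also have "\<dots> = s c' * ?J $$ (c', c)" using c Suc by simp
    finally show ?thesis using Suc by simp
  qed simp
  finally show ?thesis by simp
qed

lemma rowJ: fixes n_as :: "(nat \<times> complex) list"
  assumes k: "k < sum_list (map fst n_as)"
  shows "(\<Sum>m<sum_list (map fst n_as). jordan_matrix n_as $$ (k,m) * y m) = 
    jordan_matrix n_as $$ (k,k) * y k + (if Suc k < sum_list (map fst n_as) then jordan_matrix n_as $$ (k, Suc k) * y (Suc k) else 0)"
proof -
  let ?N = "sum_list (map fst n_as)" let ?J = "jordan_matrix n_as"
  have "(\<Sum>m<?N. ?J $$ (k,m) * y m) = (\<Sum>m<?N. (if m = k then ?J $$ (k,k) * y k else 0) + (if m = Suc k then ?J $$ (k,m) * y m else 0))"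
    by (intro sum.cong refl) (use jm_a[OF k] in auto)
  also have "\<dots> = ?J $$ (k,k) * y k + (\<Sum>m<?N. if m = Suc k then ?J $$ (k,m) * y m else 0)"
    using k by (simp add: sum.distrib)
  also have "(\<Sum>m<?N. if m = Suc k then ?J $$ (k,m) * y m else 0) = (if Suc k < ?N then ?J $$ (k, Suc k) * y (Suc k) else 0)"
    by simp
  finally show ?thesis .
qed

lemma jm_g2: fixes n_as :: "(nat \<times> complex) list"
  shows "(k,z) \<in> set n_as \<Longrightarrow> k \<ge> 2 \<Longrightarrow> \<exists>i. Suc i < sum_list (map fst n_as) \<and>
     jordan_matrix n_as $$ (i,Suc i) = 1 \<and> jordan_matrix n_as $$ (i,i) = z \<and> (i = 0 \<or> jordan_matrix n_as $$ (i - 1, i) = 0)"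
proof (induct n_as)
  case Nil then show ?case by simp
next
  case (Cons ka rest)
  obtain k0 a where ka: "ka = (k0,a)" by force
  show ?case
  proof (cases "(k,z) = ka")
    case True
    then show ?thesis using Cons(3) unfolding ka
      by (intro exI[of _ 0]) (auto simp: jm_in)
  next
    case False
    then obtain i where i: "Suc i < sum_list (map fst rest)"
     "jordan_matrix rest $$ (i,Suc i) = 1" "jordan_matrix rest $$ (i,i) = z" "i = 0 \<or> jordan_matrix rest $$ (i - 1, i) = 0" using Cons by auto
    have st: "k0 + i = 0 \<or> jordan_matrix ((k0,a) # rest) $$ (k0 + i - 1, k0 + i) = 0"
    proof (cases "i = 0")
      case True
      then show ?thesis using i(1) by (cases "k0 = 0") (auto intro: jm_off1)
    next
      case False
      then have "k0 + i - 1 = k0 + (i - 1)" by auto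
      then show ?thesis using i False jm_rest[of "i - 1" rest i k0 a] by auto
    qed
    show ?thesis using i st jm_rest[of i rest "Suc i" k0 a] jm_rest[of i rest i k0 a] unfolding ka
      by (intro exI[of _ "k0 + i"]) auto
  qed
qed

lemma jm_h2: fixes n_as :: "(nat \<times> complex) list"
  shows "(k,z) \<in> set n_as \<Longrightarrow> k \<ge> 3 \<Longrightarrow> \<exists>i. Suc (Suc i) < sum_list (map fst n_as) \<and>
     jordan_matrix n_as $$ (i,Suc i) = 1 \<and> jordan_matrix n_as $$ (Suc i,Suc (Suc i)) = 1 \<and> jordan_matrix n_as $$ (i,i) = z
     \<and> (i = 0 \<or> jordan_matrix n_as $$ (i - 1, i) = 0)"
proof (induct n_as)
  case Nil then show ?case by simp
next
  case (Cons ka rest)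
  obtain k0 a where ka: "ka = (k0,a)" by force
  show ?case
  proof (cases "(k,z) = ka")
    case True
    then show ?thesis using Cons(3) unfolding ka
      by (intro exI[of _ 0]) (auto simp: jm_in)
  next
    case False
    then obtain i where i: "Suc (Suc i) < sum_list (map fst rest)"
     "jordan_matrix rest $$ (i,Suc i) = 1" "jordan_matrix rest $$ (Suc i,Suc (Suc i)) = 1" "jordan_matrix rest $$ (i,i) = z" 
     "i = 0 \<or> jordan_matrix rest $$ (i - 1, i) = 0" using Cons by auto
    have st: "k0 + i = 0 \<or> jordan_matrix ((k0,a) # rest) $$ (k0 + i - 1, k0 + i) = 0"
    proof (cases "i = 0")
      case True
      then show ?thesis using i(1) by (cases "k0 = 0") (auto intro: jm_off1)
    next
      case False
      then have "k0 + i - 1 = k0 + (i - 1)" by auto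
      then show ?thesis using i False jm_rest[of "i - 1" rest i k0 a] by auto
    qed
    show ?thesis using i st jm_rest[of i rest "Suc i" k0 a] jm_rest[of i rest i k0 a] 
       jm_rest[of "Suc i" rest "Suc (Suc i)" k0 a] unfolding ka
      by (intro exI[of _ "k0 + i"]) auto
  qed
qed




context lyap begin
lemma kerP2: assumes "hc n p x x = 0" shows "\<forall>i<n. mvc n p x i = 0"
  using hc_kernel[OF sp psdp assms] by (auto simp: mvc_split)

lemma chain2: assumes z: "Re z = 0"
  and v: "\<And>i. i < n \<Longrightarrow> mvc n a v i = z * v i + u i"
  and w: "\<And>i. i < n \<Longrightarrow> mvc n a w i = z * w i + v i"
  and u: "\<And>i. i < n \<Longrightarrow> mvc n p u i = 0"
  shows "\<forall>i<n. mvc n p v i = 0"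
proof -
  have cz: "cnj z + z = 0" using z by (simp add: complex_eq_iff)
  have pu1: "hc n p u y = 0" for y unfolding hc_left[OF sp] using u by simp
  have pu2: "hc n p y u = 0" for y unfolding hc_right using u by simp
  have "hc n q v v = hc n p (\<lambda>i. z * v i + u i) v + hc n p v (\<lambda>i. z * v i + u i)"
    unfolding hcQ by (subst hc_cong_left[OF v], simp, subst hc_cong_right[OF v], auto)
  also have "\<dots> = (cnj z + z) * hc n p v v"
    by (simp only: hc_lin_left hc_lin_right pu1 pu2) (simp add: algebra_simps)
  finally have "hc n q v v = 0" using cz by simp
  hence qv: "\<forall>i<n. mvc n q v i = 0" by (rule kerQ)
  have "hc n q w v = 0" unfolding hc_right using qv by simp
  moreover have "hc n q w v = hc n p (\<lambda>i. z * w i + v i) v + hc n p w (\<lambda>i. z * v i + u i)"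
    unfolding hcQ by (subst hc_cong_left[OF w], simp, subst hc_cong_right[OF v], auto)
  moreover have "\<dots> = (cnj z + z) * hc n p w v + hc n p v v"
    by (simp only: hc_lin_left hc_lin_right pu1 pu2) (simp add: algebra_simps)
  ultimately have "hc n p v v = 0" using cz by simp
  thus ?thesis by (rule kerP2)
qed
end

lemma mvcA: assumes A: "A0 \<in> carrier_mat n n" and v: "v \<in> carrier_vec n" and i: "i < n"
  shows "(map_mat complex_of_real A0 *\<^sub>v v) $ i = mvc n (\<lambda>i j. A0 $$ (i,j)) (\<lambda>j. v $ j) i"
  using A v i by (subst mv_index[of _ n]) (auto simp: mvc_def)

lemma necessity:
  fixes A0 :: "real mat"
  assumes A: "A0 \<in> carrier_mat n n" and L: "lyap n p q (\<lambda>i j. A0 $$ (i,j))"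
  shows "(\<forall>z. eigenvalue (map_mat complex_of_real A0) z \<longrightarrow> Re z \<le> 0) \<and>
          (\<forall>n_as. jordan_nf (map_mat complex_of_real A0) n_as \<longrightarrow>
             (\<forall>(k, z) \<in> set n_as.
                (z = 0 \<longrightarrow> k \<le> 2) \<and>
                (z \<noteq> 0 \<and> Re z = 0 \<longrightarrow> k \<le> 1)))"
proof -
  interpret lyap n p q "\<lambda>i j. A0 $$ (i,j)" by (rule L)
  let ?a = "\<lambda>i j. A0 $$ (i,j)"
  let ?AC = "map_mat complex_of_real A0"
  have AC: "?AC \<in> carrier_mat n n" using A by auto
  have part1: "Re z \<le> 0" if ev: "eigenvalue ?AC z" for z
  proof -
    from ev obtain v where v: "v \<in> carrier_vec n" "v \<noteq> 0\<^sub>v n" "?AC *\<^sub>v v = z \<cdot>\<^sub>v v"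
      unfolding eigenvalue_def eigenvector_def using A by auto
    obtain i0 where i0: "i0 < n" "v $ i0 \<noteq> 0"
    proof (rule ccontr)
      assume "\<not> thesis" with that have "\<forall>i<n. v $ i = 0" by auto
      hence "v = 0\<^sub>v n" using v(1) by (intro eq_vecI) auto
      with v(2) show False by auto
    qed
    show ?thesis
    proof (rule eig[of "\<lambda>j. v $ j" z i0, OF _ i0])
      fix i assume i: "i < n"
      have "mvc n ?a (\<lambda>j. v $ j) i = (?AC *\<^sub>v v) $ i" using mvcA[OF A v(1) i] by simp
      also have "\<dots> = z * v $ i" using v(3) v(1) i by simp
      finally show "mvc n ?a (\<lambda>j. v $ j) i = z * v $ i" .
    qed
  qed
  have part2: "(z = 0 \<longrightarrow> k \<le> 2) \<and> (z \<noteq> 0 \<and> Re z = 0 \<longrightarrow> k \<le> 1)"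
    if jnf: "jordan_nf ?AC n_as" and kz: "(k,z) \<in> set n_as" for n_as k z
  proof -
    let ?J = "jordan_matrix n_as"
    let ?N = "sum_list (map fst n_as)"
    from jnf obtain S S' where wit: "similar_mat_wit ?AC ?J S S'"
      unfolding jordan_nf_def similar_mat_def by blast
    hence carr: "?J \<in> carrier_mat n n" "S \<in> carrier_mat n n" "S' \<in> carrier_mat n n"
      and SS': "S * S' = 1\<^sub>m n" and S'S: "S' * S = 1\<^sub>m n" and eq: "?AC = S * ?J * S'"
      unfolding similar_mat_wit_def Let_def using A by auto
    have N: "?N = n" using carr(1) by auto
    have ACS: "?AC * S = S * ?J"
    proof -
      have "?AC * S = S * ?J * S' * S" using eq by simp
      also have "\<dots> = S * ?J * (S' * S)" using carr by (intro assoc_mult_mat[of _ n n _ n _ n]) auto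
      also have "\<dots> = S * ?J" unfolding S'S by (metis carr(1) carr(2) mult_carrier_mat right_mult_one_mat)
      finally show ?thesis .
    qed
    have colnz: "\<exists>r<n. S $$ (r,c) \<noteq> 0" if c: "c < n" for c
    proof (rule ccontr)
      assume "\<not> ?thesis" hence z: "\<forall>r<n. S $$ (r,c) = 0" by auto
      have "(S' * S) $$ (c,c) = (\<Sum>k<n. S' $$ (c,k) * S $$ (k,c))" using carr c by (intro mm_index) auto
      also have "\<dots> = 0" using z by simp
      finally show False using S'S c by simp
    qed
    define x where "x = (\<lambda>c r. S $$ (r,c))"
    have key: "mvc n ?a (x c) r = (\<Sum>k<n. S $$ (r,k) * ?J $$ (k,c))" if "c < n" "r < n" for c r
    proof -
      have "(?AC * S) $$ (r,c) = (\<Sum>k<n. ?AC $$ (r,k) * S $$ (k,c))" using carr that AC by (intro mm_index) auto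
      also have "\<dots> = mvc n ?a (x c) r" unfolding mvc_def x_def using that A by auto
      finally have 1: "(?AC * S) $$ (r,c) = mvc n ?a (x c) r" .
      have "(S * ?J) $$ (r,c) = (\<Sum>k<n. S $$ (r,k) * ?J $$ (k,c))" using carr that by (intro mm_index) auto
      then show ?thesis using 1 ACS by simp
    qed
    have col: "mvc n ?a (x c) r = (if c = 0 then 0 else x (c - 1) r * ?J $$ (c - 1, c)) + x c r * ?J $$ (c,c)"
      if "c < n" "r < n" for c r
      using key[OF that] colJ[of c n_as "\<lambda>k. S $$ (r,k)"] that N unfolding x_def by simp
    show ?thesis
    proof (intro conjI impI)
      assume z0: "z = 0"
      show "k \<le> 2"
      proof (rule ccontr)
        assume "\<not> k \<le> 2"
        then obtain i where i: "Suc (Suc i) < n" "?J $$ (i,Suc i) = 1" "?J $$ (Suc i,Suc (Suc i)) = 1" "?J $$ (i,i) = z"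
          "i = 0 \<or> ?J $$ (i - 1, i) = 0" using jm_h2[OF kz] N by auto
        have d1: "?J $$ (Suc i, Suc i) = 0" using jm_c[of i n_as] i N z0 by auto
        have c0: "mvc n ?a (x i) r = 0 * x i r + 0" if "r < n" for r using col[of i r] i that z0 by auto
        have c1: "mvc n ?a (x (Suc i)) r = 0 * x (Suc i) r + x i r" if "r < n" for r using col[of "Suc i" r] i that d1 by auto
        have d2: "?J $$ (Suc (Suc i), Suc (Suc i)) = 0" using jm_c[of "Suc i" n_as] i N d1 by auto
        have c2: "mvc n ?a (x (Suc (Suc i))) r = 0 * x (Suc (Suc i)) r + x (Suc i) r" if "r < n" for r 
          using col[of "Suc (Suc i)" r] i that d2 by auto
        have p0: "\<forall>r<n. mvc n p (x i) r = 0"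
          by (rule chain2[of 0 "x i" "\<lambda>_. 0" "x (Suc i)"]) (use c0 c1 in \<open>auto simp: mvc_def\<close>)
        have "\<forall>r<n. mvc n ?a (x (Suc i)) r = 0"
          by (rule chain[of 0 "x (Suc i)" "x i" "x (Suc (Suc i))"]) (use c1 c2 p0 in auto)
        hence "\<forall>r<n. x i r = 0" using c1 by auto
        thus False using colnz[of i] i unfolding x_def by auto
      qed
    next
      assume z0: "z \<noteq> 0 \<and> Re z = 0"
      show "k \<le> 1"
      proof (rule ccontr)
        assume "\<not> k \<le> 1"
        then obtain i where i: "Suc i < n" "?J $$ (i,Suc i) = 1" "?J $$ (i,i) = z"
          "i = 0 \<or> ?J $$ (i - 1, i) = 0" using jm_g2[OF kz] N by auto
        have d1: "?J $$ (Suc i, Suc i) = z" using jm_c[of i n_as] i N by auto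
        have c0: "mvc n ?a (x i) r = z * x i r + 0" if "r < n" for r using col[of i r] i that by auto
        have c1: "mvc n ?a (x (Suc i)) r = z * x (Suc i) r + x i r" if "r < n" for r using col[of "Suc i" r] i that d1 by auto
        have "\<forall>r<n. mvc n ?a (x i) r = 0"
          by (rule chain[of z "x i" "\<lambda>_. 0" "x (Suc i)"]) (use c0 c1 z0 in \<open>auto simp: mvc_def\<close>)
        hence "\<forall>r<n. x i r = 0" using c0 z0 by auto
        thus False using colnz[of i] i unfolding x_def by auto
      qed
    qed
  qed
  show ?thesis using part1 part2 by auto
qed




lemma poly_jnf_root: "(k0, z) \<in> set n_as \<Longrightarrow> k0 \<noteq> 0 \<Longrightarrow> poly (\<Prod>(n,a)\<leftarrow>n_as. [:- a, 1:] ^ n) (z::complex) = 0"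
  by (induct n_as) auto

lemma hc_of_real: "hc n m (\<lambda>i. of_real (f i)) (\<lambda>i. of_real (g i)) = of_real (qr n m f g)"
  unfolding hc_def qr_def by simp
lemma mvc_of_real: "mvc n m (\<lambda>i. of_real (f i)) = (\<lambda>i. of_real (mvr n m f i))"
  unfolding mvc_def mvr_def by simp

lemma qr_KI: "qr n (\<lambda>i j. (\<Sum>k<n. a k i * p k j) + (\<Sum>k<n. p i k * a k j)) f g
   = qr n p (mvr n a f) g + qr n p f (mvr n a g)"
proof -
  have "complex_of_real (qr n (\<lambda>i j. (\<Sum>k<n. a k i * p k j) + (\<Sum>k<n. p i k * a k j)) f g)
    = complex_of_real (qr n p (mvr n a f) g + qr n p f (mvr n a g))"
    (is "?L = ?R")
  proof -
    have "?L = hc n (\<lambda>i j. (\<Sum>k<n. a k i * p k j) + (\<Sum>k<n. p i k * a k j)) (\<lambda>i. of_real (f i)) (\<lambda>i. of_real (g i))"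
      by (simp only: hc_of_real)
    also have "\<dots> = ?R" unfolding hc_KI mvc_of_real hc_of_real by simp
    finally show ?thesis .
  qed
  thus ?thesis by (simp only: of_real_eq_iff)
qed

lemma qr_cong_m: "(\<And>i j. i < n \<Longrightarrow> j < n \<Longrightarrow> m i j = m' i j) \<Longrightarrow> qr n m f g = qr n m' f g"
  unfolding qr_def by auto

definition Yv :: "nat \<Rightarrow> complex mat \<Rightarrow> (nat \<Rightarrow> real) \<Rightarrow> nat \<Rightarrow> complex" where
  "Yv n R f k = (\<Sum>j<n. R $$ (k,j) * of_real (f j))"

definition pp :: "nat \<Rightarrow> complex mat \<Rightarrow> (nat \<Rightarrow> real) \<Rightarrow> nat \<Rightarrow> nat \<Rightarrow> real" where
  "pp n R d i j = (\<Sum>k<n. d k * Re (cnj (R $$ (k,i)) * R $$ (k,j)))"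

lemma Yprod: "cnj (Yv n R f k) * Yv n R g k = (\<Sum>i<n. \<Sum>j<n. of_real (f i * g j) * (cnj (R $$ (k,i)) * R $$ (k,j)))"
  unfolding Yv_def cnj_sum sum_product by (intro sum.cong refl) (simp add: algebra_simps)

lemma Y1: "qr n (pp n R d) f g = (\<Sum>k<n. d k * Re (cnj (Yv n R f k) * Yv n R g k))"
proof -
  have "(\<Sum>k<n. d k * Re (cnj (Yv n R f k) * Yv n R g k)) = 
     (\<Sum>k<n. \<Sum>i<n. \<Sum>j<n. d k * (f i * g j * Re (cnj (R $$ (k,i)) * R $$ (k,j))))"
    unfolding Yprod Re_sum sum_distrib_left
    by (intro sum.cong refl) (simp add: algebra_simps)
  also have "\<dots> = (\<Sum>i<n. \<Sum>k<n. \<Sum>j<n. d k * (f i * g j * Re (cnj (R $$ (k,i)) * R $$ (k,j))))"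
    by (rule sum.swap)
  also have "\<dots> = (\<Sum>i<n. \<Sum>j<n. \<Sum>k<n. d k * (f i * g j * Re (cnj (R $$ (k,i)) * R $$ (k,j))))"
    by (intro sum.cong refl sum.swap)
  also have "\<dots> = qr n (pp n R d) f g"
    unfolding qr_def pp_def sum_distrib_left sum_distrib_right
    by (intro sum.cong refl) (simp add: algebra_simps)
  finally show ?thesis ..
qed

lemma pp_symm: "symm n (pp n R d)"
  unfolding symm_def pp_def by (auto intro!: sum.cong simp: algebra_simps)

lemma Y2: assumes R: "R \<in> carrier_mat n n" and J: "J \<in> carrier_mat n n" and AC: "map_mat complex_of_real A0 \<in> carrier_mat n n"
  and RA: "R * map_mat complex_of_real A0 = J * R" and k: "k < n"
  shows "Yv n R (mvr n (\<lambda>i j. A0 $$ (i,j)) f) k = (\<Sum>m<n. J $$ (k,m) * Yv n R f m)"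
proof -
  have A0: "A0 \<in> carrier_mat n n" using AC by auto
  have "Yv n R (mvr n (\<lambda>i j. A0 $$ (i,j)) f) k = (\<Sum>j<n. \<Sum>l<n. R $$ (k,j) * of_real (A0 $$ (j,l)) * of_real (f l))"
    unfolding Yv_def mvr_def by (simp add: sum_distrib_left mult.assoc)
  also have "\<dots> = (\<Sum>l<n. \<Sum>j<n. R $$ (k,j) * of_real (A0 $$ (j,l)) * of_real (f l))" by (rule sum.swap)
  also have "\<dots> = (\<Sum>l<n. (R * map_mat complex_of_real A0) $$ (k,l) * of_real (f l))"
  proof (intro sum.cong refl)
    fix l assume "l \<in> {..<n}"
    then have "(R * map_mat complex_of_real A0) $$ (k,l) = (\<Sum>j<n. R $$ (k,j) * of_real (A0 $$ (j,l)))"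
      using R AC k by (subst mm_index[of _ n]) auto
    then show "(\<Sum>j<n. R $$ (k,j) * of_real (A0 $$ (j,l)) * of_real (f l)) = (R * map_mat complex_of_real A0) $$ (k,l) * of_real (f l)"
      by (simp add: sum_distrib_right)
  qed
  also have "\<dots> = (\<Sum>l<n. \<Sum>m<n. J $$ (k,m) * R $$ (m,l) * of_real (f l))"
    unfolding RA
  proof (intro sum.cong refl)
    fix l assume "l \<in> {..<n}"
    then have "(J * R) $$ (k,l) = (\<Sum>m<n. J $$ (k,m) * R $$ (m,l))"
      using R J k by (subst mm_index[of _ n]) auto
    then show "(J * R) $$ (k,l) * of_real (f l) = (\<Sum>m<n. J $$ (k,m) * R $$ (m,l) * of_real (f l))"
      by (simp add: sum_distrib_right)
  qed
  also have "\<dots> = (\<Sum>m<n. \<Sum>l<n. J $$ (k,m) * R $$ (m,l) * of_real (f l))" by (rule sum.swap)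
  also have "\<dots> = (\<Sum>m<n. J $$ (k,m) * Yv n R f m)"
    unfolding Yv_def by (simp add: sum_distrib_left mult.assoc)
  finally show ?thesis .
qed

lemma Y4: assumes S: "S \<in> carrier_mat n n" and R: "R \<in> carrier_mat n n" and SR: "S * R = 1\<^sub>m n" and i: "i < n"
  shows "complex_of_real (g i) = (\<Sum>k<n. S $$ (i,k) * Yv n R g k)"
proof -
  have "(\<Sum>k<n. S $$ (i,k) * Yv n R g k) = (\<Sum>k<n. \<Sum>j<n. S $$ (i,k) * R $$ (k,j) * of_real (g j))"
    unfolding Yv_def by (simp add: sum_distrib_left mult.assoc)
  also have "\<dots> = (\<Sum>j<n. \<Sum>k<n. S $$ (i,k) * R $$ (k,j) * of_real (g j))" by (rule sum.swap)
  also have "\<dots> = (\<Sum>j<n. (S * R) $$ (i,j) * of_real (g j))"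
  proof (intro sum.cong refl)
    fix j assume "j \<in> {..<n}"
    then have "(S * R) $$ (i,j) = (\<Sum>k<n. S $$ (i,k) * R $$ (k,j))"
      using S R i by (subst mm_index[of _ n]) auto
    then show "(\<Sum>k<n. S $$ (i,k) * R $$ (k,j) * of_real (g j)) = (S * R) $$ (i,j) * of_real (g j)"
      by (simp add: sum_distrib_right)
  qed
  also have "\<dots> = (\<Sum>j<n. if j = i then complex_of_real (g j) else 0)" unfolding SR 
    by (intro sum.cong refl) (use i in auto)
  also have "\<dots> = of_real (g i)" using i by simp
  finally show ?thesis ..
qed




lemma re_cnj_sq: "Re (cnj y * y) = (cmod y)\<^sup>2"
  unfolding cmod_power2 by (simp add: power2_eq_square)

lemma sufficiency:
  fixes A0 :: "real mat"
  assumes A: "A0 \<in> carrier_mat n n"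
   and ev: "\<forall>z. eigenvalue (map_mat complex_of_real A0) z \<longrightarrow> Re z \<le> 0"
   and jc: "\<forall>n_as. jordan_nf (map_mat complex_of_real A0) n_as \<longrightarrow>
             (\<forall>(k, z) \<in> set n_as. (z = 0 \<longrightarrow> k \<le> 2) \<and> (z \<noteq> 0 \<and> Re z = 0 \<longrightarrow> k \<le> 1))"
  shows "\<exists>P0 \<in> carrier_mat n n. sym_mat P0 \<and> psd_mat n P0 \<and>
            nsd_mat n (transpose_mat A0 * P0 + P0 * A0) \<and> mat_kernel P0 \<subseteq> mat_kernel A0"
proof -
  let ?AC = "map_mat complex_of_real A0"
  let ?a = "\<lambda>i j. A0 $$ (i,j)"
  have AC: "?AC \<in> carrier_mat n n" using A by auto
  obtain as where "char_poly ?AC = (\<Prod>a\<leftarrow>as. [:- a, 1:])" using char_poly_factorized[OF AC] by auto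
  from jordan_nf_exists[OF AC this] obtain n_as where jnf: "jordan_nf ?AC n_as" by auto
  have jc': "\<And>k z. (k,z) \<in> set n_as \<Longrightarrow> (z = 0 \<longrightarrow> k \<le> 2) \<and> (z \<noteq> 0 \<and> Re z = 0 \<longrightarrow> k \<le> 1)"
    using jc jnf by auto
  let ?J = "jordan_matrix n_as"
  let ?N = "sum_list (map fst n_as)"
  from jnf obtain S S' where wit: "similar_mat_wit ?AC ?J S S'"
    unfolding jordan_nf_def similar_mat_def by blast
  hence carr: "?J \<in> carrier_mat n n" "S \<in> carrier_mat n n" "S' \<in> carrier_mat n n"
    and SS': "S * S' = 1\<^sub>m n" and S'S: "S' * S = 1\<^sub>m n" and eq: "?AC = S * ?J * S'"
    unfolding similar_mat_wit_def Let_def using A by auto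
  have N: "?N = n" using carr(1) by auto
  have RA: "S' * ?AC = ?J * S'"
  proof -
    have "S' * ?AC = S' * (S * ?J * S')" using eq by simp
    also have "\<dots> = (S' * (S * ?J)) * S'" using carr by (subst assoc_mult_mat[of _ n n _ n _ n]) auto
    also have "S' * (S * ?J) = (S' * S) * ?J" using carr by (subst assoc_mult_mat[of _ n n _ n _ n]) auto
    also have "\<dots> = ?J" unfolding S'S by (metis carr(1) left_mult_one_mat)
    finally show ?thesis .
  qed
  define lam where "lam = (\<lambda>k. ?J $$ (k,k))"
  define s where "s = (\<lambda>k. ?J $$ (k,Suc k))"
  have evJ: "Re (lam k) \<le> 0" if k: "k < n" for k
  proof -
    obtain k0 where k0: "(k0, lam k) \<in> set n_as" using jm_d[of k n_as] k N unfolding lam_def by auto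
    have "k0 \<noteq> 0" using jnf k0 unfolding jordan_nf_def by force
    hence "poly (char_poly ?AC) (lam k) = 0" using poly_jnf_root[OF k0] jordan_nf_char_poly[OF jnf] by simp
    hence "eigenvalue ?AC (lam k)" using eigenvalue_root_char_poly[OF AC] by simp
    thus ?thesis using ev by auto
  qed
  interpret jseq n lam s
  proof
    show "\<And>k. k < n \<Longrightarrow> Re (lam k) \<le> 0" by (rule evJ)
    show "\<And>k. Suc k < n \<Longrightarrow> s k = 0 \<or> s k = 1" unfolding s_def using jm_b N by auto
    show "\<And>k. Suc k < n \<Longrightarrow> s k = 1 \<Longrightarrow> lam (Suc k) = lam k" unfolding s_def lam_def using jm_c N by auto
    show "\<And>k. Suc k < n \<Longrightarrow> s k = 1 \<Longrightarrow> lam k = 0 \<or> Re (lam k) < 0"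
    proof -
      fix k assume k: "Suc k < n" "s k = 1"
      obtain k2 where k2: "k2 \<ge> 2" "(k2, lam k) \<in> set n_as" using jm_e[of k n_as] k N unfolding s_def lam_def by auto
      have "\<not> (lam k \<noteq> 0 \<and> Re (lam k) = 0)" using jc'[OF k2(2)] k2(1) by auto
      thus "lam k = 0 \<or> Re (lam k) < 0" using evJ[of k] k by force
    qed
  qed
  have szero: "\<And>k. Suc (Suc k) < n \<Longrightarrow> s k = 1 \<Longrightarrow> lam k = 0 \<Longrightarrow> s (Suc k) \<noteq> 1"
  proof
    fix k assume k: "Suc (Suc k) < n" "s k = 1" "lam k = 0" "s (Suc k) = 1"
    obtain k3 where k3: "k3 \<ge> 3" "(k3, lam k) \<in> set n_as" using jm_f[of k n_as] k N unfolding s_def lam_def by auto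
    show False using jc'[OF k3(2)] k3(1) k(3) by auto
  qed
  define p where "p = pp n S' d"
  define P0 where "P0 = mat n n (\<lambda>(i,j). p i j)"
  have P0: "P0 \<in> carrier_mat n n" unfolding P0_def by auto
  have P0e: "\<And>i j. i < n \<Longrightarrow> j < n \<Longrightarrow> P0 $$ (i,j) = p i j" unfolding P0_def by auto
  have psp: "symm n p" unfolding p_def by (rule pp_symm)
  define y where "y = (\<lambda>f. Yv n S' f)"
  have qrp: "qr n p f g = (\<Sum>k<n. d k * Re (cnj (y f k) * y g k))" for f g unfolding p_def y_def by (rule Y1)
  have qrP0: "v \<bullet> (P0 *\<^sub>v w) = qr n p (\<lambda>i. v $ i) (\<lambda>i. w $ i)" if "v \<in> carrier_vec n" "w \<in> carrier_vec n" for v w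
    using sp_qr[OF P0 that] P0e by (auto intro: qr_cong_m)
  have psdq: "qr n p f f \<ge> 0" for f
    unfolding qrp re_cnj_sq by (intro sum_nonneg mult_nonneg_nonneg d_nonneg) auto
  have symP0: "sym_mat P0" unfolding sym_mat_def
    by (rule eq_matI) (use P0 psp in \<open>auto simp: P0e symm_def\<close>)
  have psd: "psd_mat n P0" unfolding psd_mat_def using P0 symP0 qrP0 psdq by auto
  let ?Q = "transpose_mat A0 * P0 + P0 * A0"
  have Q: "?Q \<in> carrier_mat n n" using A P0 by auto
  have symQ: "sym_mat ?Q"
  proof -
    have "transpose_mat ?Q = transpose_mat (transpose_mat A0 * P0) + transpose_mat (P0 * A0)"
      using A P0 by (intro transpose_add) auto
    also have "\<dots> = transpose_mat P0 * A0 + transpose_mat A0 * transpose_mat P0"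
      using A P0 by (simp add: transpose_mult[of _ n n _ n])
    also have "\<dots> = P0 * A0 + transpose_mat A0 * P0" using symP0 unfolding sym_mat_def by simp
    also have "\<dots> = ?Q" using A P0 by (intro comm_add_mat[of _ n n]) auto
    finally show ?thesis unfolding sym_mat_def .
  qed
  have rowy: "(\<Sum>m<n. ?J $$ (k,m) * y f m) = lam k * y f k + (if Suc k < n then s k * y f (Suc k) else 0)"
    if "k < n" for k f using rowJ[of k n_as "y f"] that N unfolding lam_def s_def by simp
  have Yk: "y (mvr n ?a f) k = lam k * y f k + (if Suc k < n then s k * y f (Suc k) else 0)" if "k < n" for k f
    unfolding y_def using Y2[OF carr(3) carr(1) AC RA that, of f] rowy[OF that, of f] unfolding y_def by simp
  have nsdq: "qr n (\<lambda>i j. ?Q $$ (i,j)) f f \<le> 0" for f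
  proof -
    have "qr n (\<lambda>i j. ?Q $$ (i,j)) f f = qr n (\<lambda>i j. (\<Sum>k<n. ?a k i * p k j) + (\<Sum>k<n. p i k * ?a k j)) f f"
      by (rule qr_cong_m) (use A P0 P0e in \<open>auto simp: mm_index[of _ n] scalar_prod_def atLeast0LessThan\<close>)
    also have "\<dots> = qr n p (mvr n ?a f) f + qr n p f (mvr n ?a f)" by (rule qr_KI)
    also have "\<dots> = 2 * qr n p f (mvr n ?a f)" using qr_sym[OF psp, of "mvr n ?a f" f] by simp
    also have "qr n p f (mvr n ?a f) = (\<Sum>k<n. T (y f) k)" unfolding qrp T_def
      by (intro sum.cong refl) (simp add: Yk)
    also have "\<dots> \<le> 0" by (rule quad_neg)
    finally show ?thesis by simp
  qed
  have nsd: "nsd_mat n ?Q" unfolding nsd_mat_def using Q symQ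
  proof (intro conjI ballI; simp?)
    fix v :: "real vec" assume v: "v \<in> carrier_vec n"
    have "v \<bullet> (?Q *\<^sub>v v) = qr n (\<lambda>i j. ?Q $$ (i,j)) (\<lambda>i. v $ i) (\<lambda>i. v $ i)" by (rule sp_qr[OF Q v v])
    thus "v \<bullet> (?Q *\<^sub>v v) \<le> 0" using nsdq by simp
  qed
  have kern: "mat_kernel P0 \<subseteq> mat_kernel A0"
  proof
    fix v assume "v \<in> mat_kernel P0"
    hence v: "v \<in> carrier_vec n" "P0 *\<^sub>v v = 0\<^sub>v n" unfolding mat_kernel_def using P0 by auto
    define f where "f = (\<lambda>i. v $ i)"
    have "mvr n p f i = 0" if i: "i < n" for i
    proof -
      have "(P0 *\<^sub>v v) $ i = mvr n p f i" using P0 v i P0e by (subst mv_index[of _ n]) (auto simp: mvr_def f_def)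
      thus ?thesis using v i by simp
    qed
    hence "qr n p f f = 0" unfolding qr_mvr by simp
    hence "(\<Sum>k<n. d k * (cmod (y f k))\<^sup>2) = 0" unfolding qrp re_cnj_sq .
    from quad_ker[OF szero this] have qk: "\<forall>k<n. lam k * y f k + (if Suc k < n then s k * y f (Suc k) else 0) = 0" .
    have "y (mvr n ?a f) k = 0" if k: "k < n" for k
    proof -
      have "y (mvr n ?a f) k = lam k * y f k + (if Suc k < n then s k * y f (Suc k) else 0)" by (rule Yk[OF k])
      also have "\<dots> = 0" using qk k by blast
      finally show ?thesis .
    qed
    hence "complex_of_real (mvr n ?a f i) = 0" if "i < n" for i
      using Y4[OF carr(2) carr(3) SS' that, of "mvr n ?a f"] unfolding y_def by simp
    hence mz: "mvr n ?a f i = 0" if "i < n" for i using that by simp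
    have "A0 *\<^sub>v v = 0\<^sub>v n"
    proof (rule eq_vecI)
      fix i assume "i < dim_vec (0\<^sub>v n :: real vec)"
      hence i: "i < n" by simp
      have "(A0 *\<^sub>v v) $ i = mvr n ?a f i" using A v i by (subst mv_index[of _ n]) (auto simp: mvr_def f_def)
      thus "(A0 *\<^sub>v v) $ i = 0\<^sub>v n $ i" using mz[OF i] i by simp
    qed (use A in auto)
    thus "v \<in> mat_kernel A0" unfolding mat_kernel_def using A v by auto
  qed
  show ?thesis using P0 symP0 psd nsd kern by auto
qed

theorem proposition1:
  fixes A0 :: "real mat" and n :: nat
  assumes "A0 \<in> carrier_mat n n"
  shows "(\<exists>P0 \<in> carrier_mat n n. sym_mat P0 \<and> psd_mat n P0 \<and>
            nsd_mat n (transpose_mat A0 * P0 + P0 * A0) \<and>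
            mat_kernel P0 \<subseteq> mat_kernel A0)
    \<longleftrightarrow>
         ((\<forall>z. eigenvalue (map_mat complex_of_real A0) z \<longrightarrow> Re z \<le> 0) \<and>
          (\<forall>n_as. jordan_nf (map_mat complex_of_real A0) n_as \<longrightarrow>
             (\<forall>(k, z) \<in> set n_as.
                (z = 0 \<longrightarrow> k \<le> 2) \<and>
                (z \<noteq> 0 \<and> Re z = 0 \<longrightarrow> k \<le> 1))))"
proof
  assume "\<exists>P0 \<in> carrier_mat n n. sym_mat P0 \<and> psd_mat n P0 \<and>
            nsd_mat n (transpose_mat A0 * P0 + P0 * A0) \<and> mat_kernel P0 \<subseteq> mat_kernel A0"
  then obtain P0 where P0: "P0 \<in> carrier_mat n n" "psd_mat n P0"
    "nsd_mat n (transpose_mat A0 * P0 + P0 * A0)" "mat_kernel P0 \<subseteq> mat_kernel A0" by auto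
  show "(\<forall>z. eigenvalue (map_mat complex_of_real A0) z \<longrightarrow> Re z \<le> 0) \<and>
          (\<forall>n_as. jordan_nf (map_mat complex_of_real A0) n_as \<longrightarrow>
             (\<forall>(k, z) \<in> set n_as. (z = 0 \<longrightarrow> k \<le> 2) \<and> (z \<noteq> 0 \<and> Re z = 0 \<longrightarrow> k \<le> 1)))"
    by (rule necessity[OF assms lyap_of_mats[OF assms P0]])
next
  assume "(\<forall>z. eigenvalue (map_mat complex_of_real A0) z \<longrightarrow> Re z \<le> 0) \<and>
          (\<forall>n_as. jordan_nf (map_mat complex_of_real A0) n_as \<longrightarrow>
             (\<forall>(k, z) \<in> set n_as. (z = 0 \<longrightarrow> k \<le> 2) \<and> (z \<noteq> 0 \<and> Re z = 0 \<longrightarrow> k \<le> 1)))"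
  then show "\<exists>P0 \<in> carrier_mat n n. sym_mat P0 \<and> psd_mat n P0 \<and>
            nsd_mat n (transpose_mat A0 * P0 + P0 * A0) \<and> mat_kernel P0 \<subseteq> mat_kernel A0"
    using sufficiency[OF assms] by blast
qed


end
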